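(* Let $F:\mathcal M^S_n\to\mathbb R$ satisfy (H) and be rotationally invariant, and let $F^*$ be its recession function. Then either $\{M:F(M)\le0\}=\{M:\operatorname{tr}M\le0\}$, or there exists $\Lambda_F>1$ such that $\{M:F^*(M)\le0\}\subset\{M:\mathcal P^+_{1,\Lambda_F}(M)\le0\}$.
   Context: $\mathcal M^S_n$ real symmetric matrices. Pucci operators: $\mathcal P^+_{\lambda,\Lambda}(M)=\Lambda\sum_{\mu_i>0}\mu_i+\lambda\sum_{\mu_i<0}\mu_i$, $\mathcal P^-_{\lambda,\Lambda}(M)=\lambda\sum_{\mu_i>0}\mu_i+\Lambda\sum_{\mu_i<0}\mu_i$ ($\mu_i$ eigenvalues). $F$ satisfies (H) if convex, $F(0)=0$, and $\mathcal P^-_{\lambda,\Lambda}(N)\le F(M+N)-F(M)\le\mathcal P^+_{\lambda,\Lambda}(N)$ for all $M,N$ (some $0<\lambda\le\Lambda$). Rotationally invariant: $F(O^TMO)=F(M)$ for orthogonal $O$. Recession function $F^*(A)=\lim_{t\downarrow0}tF(t^{-1}A)$. *)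

theory Defs
  imports "HOL-Analysis.Analysis" "HOL-Computational_Algebra.Polynomial"
begin

definition sym_mat :: "real^'n^'n \<Rightarrow> bool" where
  "sym_mat M \<longleftrightarrow> transpose M = M"

definition mtrace :: "real^'n^'n \<Rightarrow> real" where
  "mtrace M = (\<Sum>i\<in>UNIV. M $ i $ i)"

definition charpoly :: "real^'n^'n \<Rightarrow> real poly" where
  "charpoly M = det (\<chi> i j. (if i = j then [:0, 1:] else 0) - [:M $ i $ j:])"

definition pos_eig_sum :: "real^'n^'n \<Rightarrow> real" where
  "pos_eig_sum M = (\<Sum>\<mu>\<in>{\<mu>. \<mu> > 0 \<and> poly (charpoly M) \<mu> = 0}. of_nat (order \<mu> (charpoly M)) * \<mu>)"

definition neg_eig_sum :: "real^'n^'n \<Rightarrow> real" where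
  "neg_eig_sum M = (\<Sum>\<mu>\<in>{\<mu>. \<mu> < 0 \<and> poly (charpoly M) \<mu> = 0}. of_nat (order \<mu> (charpoly M)) * \<mu>)"

definition pucci_plus :: "real \<Rightarrow> real \<Rightarrow> real^'n^'n \<Rightarrow> real" where
  "pucci_plus l L M = L * pos_eig_sum M + l * neg_eig_sum M"

definition pucci_minus :: "real \<Rightarrow> real \<Rightarrow> real^'n^'n \<Rightarrow> real" where
  "pucci_minus l L M = l * pos_eig_sum M + L * neg_eig_sum M"

definition hypH :: "real \<Rightarrow> real \<Rightarrow> (real^'n^'n \<Rightarrow> real) \<Rightarrow> bool" where
  "hypH l L F \<longleftrightarrow> 0 < l \<and> l \<le> L \<and>
     convex_on {M. sym_mat M} F \<and> F 0 = 0 \<and>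
     (\<forall>M N. sym_mat M \<longrightarrow> sym_mat N \<longrightarrow>
        pucci_minus l L N \<le> F (M + N) - F M \<and> F (M + N) - F M \<le> pucci_plus l L N)"

definition rot_invariant :: "(real^'n^'n \<Rightarrow> real) \<Rightarrow> bool" where
  "rot_invariant F \<longleftrightarrow>
     (\<forall>Q M. orthogonal_matrix Q \<longrightarrow> sym_mat M \<longrightarrow> F (transpose Q ** M ** Q) = F M)"

definition recession :: "(real^'n^'n \<Rightarrow> real) \<Rightarrow> real^'n^'n \<Rightarrow> real" where
  "recession F A = Lim (at_right 0) (\<lambda>t. t * F ((1 / t) *\<^sub>R A))"

end

theory Submission imports Defs begin

definition diagm :: "real^'n \<Rightarrow> real^'n^'n" where
  "diagm x = (\<chi> i j. if i = j then x$i else 0)"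

lemma mm_diff_l: fixes A B C :: "real^'n^'n" shows "A ** (B - C) = A ** B - A ** C"
  by (simp add: matrix_matrix_mult_def vec_eq_iff algebra_simps sum_subtractf)
lemma mm_diff_r: fixes A B C :: "real^'n^'n" shows "(B - C) ** A = B ** A - C ** A"
  by (simp add: matrix_matrix_mult_def vec_eq_iff algebra_simps sum_subtractf)
lemma mm_add_l: fixes A B C :: "real^'n^'n" shows "A ** (B + C) = A ** B + A ** C"
  by (simp add: matrix_matrix_mult_def vec_eq_iff algebra_simps sum.distrib)
lemma mm_add_r: fixes A B C :: "real^'n^'n" shows "(B + C) ** A = B ** A + C ** A"
  by (simp add: matrix_matrix_mult_def vec_eq_iff algebra_simps sum.distrib)
lemma mm_scale_l: fixes A B :: "real^'n^'n" shows "(c *\<^sub>R A) ** B = c *\<^sub>R (A ** B)"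
  by (simp add: matrix_matrix_mult_def vec_eq_iff algebra_simps sum_distrib_left)
lemma mm_scale_r: fixes A B :: "real^'n^'n" shows "A ** (c *\<^sub>R B) = c *\<^sub>R (A ** B)"
  by (simp add: matrix_matrix_mult_def vec_eq_iff algebra_simps sum_distrib_left)
lemma mat_scale: "(mat x :: real^'n^'n) = x *\<^sub>R mat 1"
  by (simp add: mat_def vec_eq_iff)

lemma poly_charpoly: "poly (charpoly M) x = det (mat x - M)"
  unfolding charpoly_def det_def
  by (auto simp add: poly_sum poly_prod mat_def of_int_poly intro!: sum.cong prod.cong)

lemma conj_mat:
  fixes Q :: "real^'n^'n"
  assumes "orthogonal_matrix Q"
  shows "transpose Q ** mat x ** Q = mat x"
  using assms
  by (metis mat_scale matrix_mul_rid mm_scale_l mm_scale_r orthogonal_matrix)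

lemma det_conj:
  fixes Q A :: "real^'n^'n"
  assumes "orthogonal_matrix Q"
  shows "det (transpose Q ** A ** Q) = det A"
proof -
  have "det (transpose Q ** A ** Q) = det (transpose Q) * det A * det Q"
    by (simp add: det_mul)
  also have "\<dots> = det A * det (transpose Q ** Q)" by (simp add: det_mul)
  also have "\<dots> = det A" using assms by (simp add: orthogonal_matrix)
  finally show ?thesis .
qed

lemma charpoly_conj:
  fixes Q D :: "real^'n^'n"
  assumes "orthogonal_matrix Q"
  shows "charpoly (transpose Q ** D ** Q) = charpoly D"
proof -
  have "poly (charpoly (transpose Q ** D ** Q)) x = poly (charpoly D) x" for x
  proof -
    have "mat x - transpose Q ** D ** Q = transpose Q ** (mat x - D) ** Q"
      using assms by (simp add: mm_diff_l mm_diff_r conj_mat)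
    then show ?thesis by (simp add: poly_charpoly det_conj[OF assms])
  qed
  then show ?thesis by (metis poly_eq_poly_eq_iff ext)
qed

lemma charpoly_diag: "charpoly (diagm d) = (\<Prod>i\<in>UNIV. [:- (d$i), 1:])"
proof -
  have "poly (charpoly (diagm d)) x = poly (\<Prod>i\<in>UNIV. [:- (d$i), 1:]) x" for x
    unfolding poly_charpoly poly_prod
    by (subst det_diagonal) (auto simp: diagm_def mat_def)
  then show ?thesis by (metis poly_eq_poly_eq_iff ext)
qed

lemma order_lin: "order a [:-b, 1:] = (if a = b then 1 else (0::nat))"
  using order_power_n_n[of a 1] by (auto intro: order_0I)

lemma order_prod_lin:
  fixes d :: "'i \<Rightarrow> real"
  assumes "finite I"
  shows "order a (\<Prod>i\<in>I. [:- d i, 1:]) = card {i\<in>I. d i = a}"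
  using assms
proof (induction I rule: finite_induct)
  case empty then show ?case by simp
next
  case (insert j I)
  have nz: "(\<Prod>i\<in>I. [:- d i, 1:]) \<noteq> 0" using insert by (simp add: prod_zero_iff)
  have pe: "(\<Prod>i\<in>insert j I. [:- d i, 1:]) = [:- d j, 1:] * (\<Prod>i\<in>I. [:- d i, 1:])"
    by (rule prod.insert[OF insert(1,2)])
  have "order a (\<Prod>i\<in>insert j I. [:- d i, 1:]) = order a [:- d j, 1:] + order a (\<Prod>i\<in>I. [:- d i, 1:])"
  proof -
    have nz2: "[:- d j, 1:] * (\<Prod>i\<in>I. [:- d i, 1:]) \<noteq> 0"
      using nz by (metis mult_eq_0_iff pCons_eq_0_iff one_neq_zero)
    show ?thesis unfolding pe by (rule order_mult[OF nz2])
  qed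
  also have "\<dots> = card {i\<in>insert j I. d i = a}"
  proof (cases "d j = a")
    case True
    then have "{i\<in>insert j I. d i = a} = insert j {i\<in>I. d i = a}" by auto
    then show ?thesis using True insert by (simp add: order_lin)
  next
    case False
    then have "{i\<in>insert j I. d i = a} = {i\<in>I. d i = a}" by auto
    then show ?thesis using False insert by (simp add: order_lin)
  qed
  finally show ?case .
qed

lemma sum_by_value:
  fixes d :: "'i::finite \<Rightarrow> real"
  assumes P0: "\<not> P 0"
  shows "(\<Sum>\<mu>\<in>{\<mu>. P \<mu> \<and> poly (\<Prod>i\<in>UNIV. [:- d i, 1:]) \<mu> = 0}.
            of_nat (order \<mu> (\<Prod>i\<in>UNIV. [:- d i, 1:])) * \<mu>)
         = (\<Sum>i\<in>UNIV. if P (d i) then d i else 0)"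
proof -
  let ?S = "{i. P (d i)}"
  have set: "{\<mu>. P \<mu> \<and> poly (\<Prod>i\<in>UNIV. [:- d i, 1:]) \<mu> = 0} = d ` ?S"
    by (auto simp: poly_prod prod_zero_iff)
  have "(\<Sum>i\<in>UNIV. if P (d i) then d i else 0) = sum d ?S"
    by (simp add: sum.inter_filter[symmetric])
  also have "\<dots> = (\<Sum>y\<in>d ` ?S. sum d {x\<in>?S. d x = y})"
    by (rule sum.image_gen) simp
  also have "\<dots> = (\<Sum>y\<in>d ` ?S. of_nat (card {i. d i = y}) * y)"
  proof (rule sum.cong)
    fix y assume "y \<in> d ` ?S"
    then have "{x\<in>?S. d x = y} = {i. d i = y}" by auto
    then show "sum d {x\<in>?S. d x = y} = of_nat (card {i. d i = y}) * y" by simp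
  qed simp
  finally show ?thesis
    unfolding set by (simp add: order_prod_lin)
qed

lemma pos_eig_conj:
  assumes "orthogonal_matrix Q"
  shows "pos_eig_sum (transpose Q ** diagm d ** Q) = (\<Sum>i\<in>UNIV. max (d$i) 0)"
  unfolding pos_eig_sum_def charpoly_conj[OF assms] charpoly_diag
  using sum_by_value[of "\<lambda>\<mu>. \<mu> > 0" "\<lambda>i. d$i"]
  by (simp add: max_def cong: sum.cong) (auto intro!: sum.cong)

lemma neg_eig_conj:
  assumes "orthogonal_matrix Q"
  shows "neg_eig_sum (transpose Q ** diagm d ** Q) = (\<Sum>i\<in>UNIV. min (d$i) 0)"
  unfolding neg_eig_sum_def charpoly_conj[OF assms] charpoly_diag
  using sum_by_value[of "\<lambda>\<mu>. \<mu> < 0" "\<lambda>i. d$i"]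
  by (simp add: min_def cong: sum.cong) (auto intro!: sum.cong)

lemma sym_dot:
  fixes A :: "real^'n^'n"
  assumes "transpose A = A"
  shows "x \<bullet> (A *v y) = (A *v x) \<bullet> y"
proof -
  have "x \<bullet> (A *v y) = (x v* A) \<bullet> y" by (simp add: dot_lmul_matrix)
  also have "x v* A = transpose A *v x" by (simp add: transpose_matrix_vector)
  finally show ?thesis using assms by simp
qed

lemma eigen_step:
  fixes A :: "real^'n^'n"
  assumes symA: "transpose A = A" and finB: "finite B"
    and eigB: "\<And>b. b \<in> B \<Longrightarrow> \<exists>\<mu>. A *v b = \<mu> *\<^sub>R b"
    and ex: "x0 \<noteq> 0" "\<forall>b\<in>B. b \<bullet> x0 = 0"
  shows "\<exists>v. norm v = 1 \<and> (\<forall>b\<in>B. b \<bullet> v = 0) \<and> (\<exists>m. A *v v = m *\<^sub>R v)"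
proof -
  define S where "S = {x::real^'n. \<forall>b\<in>B. b \<bullet> x = 0}"
  define K where "K = S \<inter> sphere 0 1"
  have clS: "closed S"
  proof -
    have "S = (\<Inter>b\<in>B. {x. b \<bullet> x = 0})" unfolding S_def by auto
    then show ?thesis by (simp add: closed_INT closed_hyperplane)
  qed
  then have cK: "compact K" unfolding K_def by (simp add: closed_Int_compact)
  have neK: "K \<noteq> {}"
  proof -
    have "(1/norm x0) *\<^sub>R x0 \<in> K" using ex unfolding K_def S_def by (auto simp: inner_commute)
    then show ?thesis by blast
  qed
  have coK: "continuous_on K (\<lambda>x. x \<bullet> (A *v x))"
    by (intro continuous_intros linear_continuous_on matrix_vector_mul_bounded_linear)
  obtain v where vK: "v \<in> K" and vmax: "\<And>y. y \<in> K \<Longrightarrow> y \<bullet> (A *v y) \<le> v \<bullet> (A *v v)"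
    using continuous_attains_sup[OF cK neK coK] by blast
  have v1: "norm v = 1" "v \<bullet> v = 1" and vS: "v \<in> S" using vK unfolding K_def by (auto simp: dot_square_norm)
  define lam where "lam = v \<bullet> (A *v v)"
  define r where "r = A *v v - lam *\<^sub>R v"
  have Sin: "A *v x \<in> S" if "x \<in> S" for x
  proof -
    have "b \<bullet> (A *v x) = 0" if "b \<in> B" for b
    proof -
      obtain \<mu> where "A *v b = \<mu> *\<^sub>R b" using eigB[OF \<open>b \<in> B\<close>] by blast
      then have "b \<bullet> (A *v x) = \<mu> * (b \<bullet> x)" using sym_dot[OF symA, of b x] by simp
      then show ?thesis using \<open>x \<in> S\<close> \<open>b \<in> B\<close> unfolding S_def by simp
    qed
    then show ?thesis unfolding S_def by auto
  qed
  have rS: "r \<in> S" using Sin[OF vS] vS unfolding r_def S_def by (auto simp: inner_diff_right)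
  have rv: "v \<bullet> r = 0" unfolding r_def lam_def by (simp add: inner_diff_right v1)
  have rAv: "r \<bullet> (A *v v) = r \<bullet> r"
    unfolding r_def by (simp add: inner_diff_left inner_diff_right lam_def inner_commute v1 algebra_simps)
  define a where "a = r \<bullet> r"
  define c where "c = r \<bullet> (A *v r) - lam * a"
  have key: "2 * t * a + t\<^sup>2 * c \<le> 0" for t
  proof -
    let ?w = "v + t *\<^sub>R r"
    have ww: "?w \<bullet> ?w = 1 + t\<^sup>2 * a"
      using rv by (simp add: inner_add_left inner_add_right v1 inner_commute a_def power2_eq_square)
    then have wpos: "?w \<bullet> ?w > 0" by (simp add: a_def add_pos_nonneg)
    define \<rho> where "\<rho> = norm ?w"
    have rho2: "\<rho>\<^sup>2 = ?w \<bullet> ?w" unfolding \<rho>_def by (simp add: dot_square_norm)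
    have rpos: "\<rho> > 0" using wpos rho2 unfolding \<rho>_def by auto
    define y where "y = (1 / \<rho>) *\<^sub>R ?w"
    have wS: "?w \<in> S" using vS rS unfolding S_def by (auto simp: inner_add_right)
    have "y \<in> K" using wS rpos unfolding K_def S_def y_def \<rho>_def by auto
    from vmax[OF this] have "y \<bullet> (A *v y) \<le> lam" unfolding lam_def .
    moreover have "y \<bullet> (A *v y) = (?w \<bullet> (A *v ?w)) / \<rho>\<^sup>2"
      unfolding y_def matrix_vector_mult_scaleR inner_scaleR_left inner_scaleR_right
      by (simp add: power2_eq_square)
    ultimately have "(?w \<bullet> (A *v ?w)) / \<rho>\<^sup>2 \<le> lam" by simp
    then have "?w \<bullet> (A *v ?w) \<le> lam * \<rho>\<^sup>2" using rpos by (simp add: pos_divide_le_eq)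
    then have h1: "?w \<bullet> (A *v ?w) \<le> lam * (?w \<bullet> ?w)" using rho2 by simp
    have h2: "?w \<bullet> (A *v ?w) = lam + 2 * t * a + t\<^sup>2 * (r \<bullet> (A *v r))"
    proof -
      have "v \<bullet> (A *v r) = r \<bullet> (A *v v)" using sym_dot[OF symA, of v r] by (simp add: inner_commute)
      then show ?thesis
        by (simp add: matrix_vector_right_distrib matrix_vector_mult_scaleR inner_add_left inner_add_right
            lam_def rAv a_def power2_eq_square algebra_simps)
    qed
    have "lam + 2 * t * a + t\<^sup>2 * (r \<bullet> (A *v r)) \<le> lam * (1 + t\<^sup>2 * a)"
      using h1 unfolding h2 ww .
    then show ?thesis by (simp add: c_def algebra_simps)
  qed
  have "a = 0"
  proof -
    define q where "q = \<bar>c\<bar> + 1"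
    have q: "q > 0" unfolding q_def by simp
    have "2 * (a / q) * a + (a / q)\<^sup>2 * c \<le> 0" by (rule key)
    moreover have "2 * (a / q) * a + (a / q)\<^sup>2 * c = a\<^sup>2 * (2 * q + c) / q\<^sup>2"
      using q by (simp add: field_simps power2_eq_square)
    ultimately have "a\<^sup>2 * (2 * q + c) \<le> 0" using q by (simp add: divide_le_0_iff)
    moreover have "2 * q + c > 0" unfolding q_def by (cases "c < 0") auto
    ultimately have "a\<^sup>2 \<le> 0" by (simp add: mult_le_0_iff)
    then show ?thesis by simp
  qed
  then have "r = 0" unfolding a_def by simp
  then have "A *v v = lam *\<^sub>R v" unfolding r_def by simp
  then show ?thesis using v1 vS unfolding S_def by blast
qed


lemma spectral_aux:
  fixes A :: "real^'n^'n"
  assumes symA: "transpose A = A"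
  shows "k \<le> CARD('n) \<Longrightarrow> \<exists>B. finite B \<and> card B = k \<and> pairwise orthogonal B \<and>
            (\<forall>b\<in>B. norm b = 1 \<and> (\<exists>m. A *v b = m *\<^sub>R b))"
proof (induction k)
  case 0 then show ?case by (intro exI[of _ "{}"]) auto
next
  case (Suc k)
  then obtain B where B: "finite B" "card B = k" "pairwise orthogonal B"
      "\<forall>b\<in>B. norm b = 1 \<and> (\<exists>m. A *v b = m *\<^sub>R b)" by auto
  have "dim (span B) \<le> card B" using B(1) dim_le_card[of "span B" B] by (simp add: span_superset)
  moreover have "span B = UNIV \<Longrightarrow> dim B = CARD('n)"
    by (metis dim_span dim_UNIV DIM_cart DIM_real mult_1_right)
  ultimately have "span B \<noteq> UNIV" using Suc.prems B(2) by auto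
  then obtain x0 where x0: "x0 \<noteq> 0" "\<forall>x\<in>span B. x0 \<bullet> x = 0"
    using span_not_UNIV_orthogonal by blast
  then have "\<forall>b\<in>B. b \<bullet> x0 = 0" by (simp add: span_base inner_commute)
  from eigen_step[OF symA B(1) _ x0(1) this] B(4)
  obtain v where v: "norm v = 1" "\<forall>b\<in>B. b \<bullet> v = 0" "\<exists>m. A *v v = m *\<^sub>R v" by blast
  have "v \<notin> B" using v by (metis inner_commute norm_eq_1 zero_neq_one)
  have po: "pairwise orthogonal (insert v B)"
    unfolding pairwise_insert using B(3) v(2)
    by (auto simp: orthogonal_def inner_commute)
  show ?case
    apply (rule exI[of _ "insert v B"])
    using B v \<open>v \<notin> B\<close> po by auto
qed

lemma spectral:
  fixes A :: "real^'n^'n"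
  assumes symA: "transpose A = A"
  shows "\<exists>Q d. orthogonal_matrix Q \<and> A = transpose Q ** diagm d ** Q"
proof -
  obtain B where B: "finite B" "card B = CARD('n)" "pairwise orthogonal B"
      "\<forall>b\<in>B. norm b = 1 \<and> (\<exists>m. A *v b = m *\<^sub>R b)"
    using spectral_aux[OF symA, of "CARD('n)"] by auto
  obtain f where f: "bij_betw f (UNIV::'n::finite set) B"
    using finite_same_card_bij[of "UNIV::'n set" B] B by auto
  define Q :: "real^'n^'n" where "Q = (\<chi> i. f i)"
  define d :: "real^'n" where "d = (\<chi> i. SOME m. A *v f i = m *\<^sub>R f i)"
  have fB: "f i \<in> B" for i using f by (auto simp: bij_betw_def)
  have eig: "A *v f i = (d$i) *\<^sub>R f i" for i
    unfolding d_def using B(4) fB[of i] by (auto intro: someI_ex)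
  have rowQ: "row i Q = f i" for i by (simp add: Q_def row_def vec_eq_iff)
  have oQ: "orthogonal_matrix Q"
    unfolding orthogonal_matrix_orthonormal_rows rowQ
  proof safe
    fix i show "norm (f i) = 1" using B(4) fB by auto
  next
    fix i j :: 'n assume "i \<noteq> j"
    then have "f i \<noteq> f j" using f by (auto simp: bij_betw_def inj_on_def)
    then show "orthogonal (f i) (f j)" using B(3) fB by (auto simp: pairwise_def)
  qed
  have AQ: "A ** transpose Q = transpose Q ** diagm d"
  proof -
    have "(A ** transpose Q) $ j $ i = (transpose Q ** diagm d) $ j $ i" for i j
    proof -
      have "(A ** transpose Q) $ j $ i = (A *v f i) $ j"
        by (simp add: matrix_matrix_mult_def matrix_vector_mult_def transpose_def Q_def)
      also have "\<dots> = d$i * f i $ j" by (simp add: eig)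
      also have "\<dots> = (transpose Q ** diagm d) $ j $ i"
        by (simp add: matrix_matrix_mult_def transpose_def Q_def diagm_def if_distrib[of "\<lambda>x. _ * x"] cong: if_cong)
      finally show ?thesis .
    qed
    then show ?thesis by (simp add: vec_eq_iff)
  qed
  have "A = A ** (transpose Q ** Q)" using oQ by (simp add: orthogonal_matrix)
  also have "\<dots> = transpose Q ** diagm d ** Q" by (simp add: matrix_mul_assoc AQ)
  finally show ?thesis using oQ by blast
qed


lemma sym_iff: "sym_mat A \<longleftrightarrow> (\<forall>i j. A$i$j = A$j$i)"
  unfolding sym_mat_def transpose_def by (auto simp: vec_eq_iff)

lemma sym_diagm[simp]: "sym_mat (diagm x)"
  by (simp add: sym_iff diagm_def)

lemma sym_add[simp]: "sym_mat A \<Longrightarrow> sym_mat B \<Longrightarrow> sym_mat (A + B)"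
  by (simp add: sym_iff)

lemma sym_diff[simp]: "sym_mat A \<Longrightarrow> sym_mat B \<Longrightarrow> sym_mat (A - B)"
  by (simp add: sym_iff)

lemma sym_scale[simp]: "sym_mat A \<Longrightarrow> sym_mat (c *\<^sub>R A)"
  by (simp add: sym_iff)

lemma sym_zero[simp]: "sym_mat 0"
  by (simp add: sym_iff)

lemma sym_mat_c[simp]: "sym_mat (mat c)"
  by (simp add: sym_iff mat_def)

lemma sym_conj: fixes Q :: "real^'n^'n" shows "sym_mat D \<Longrightarrow> sym_mat (transpose Q ** D ** Q)"
  unfolding sym_mat_def by (simp add: matrix_transpose_mul matrix_mul_assoc)

lemma mat_diagm: "mat c = diagm (\<chi> i. c)"
  by (simp add: mat_def diagm_def vec_eq_iff)

lemma diagm_scale: "c *\<^sub>R diagm x = diagm (c *\<^sub>R x)"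
  by (simp add: diagm_def vec_eq_iff)

lemma diagm_add: "diagm x + diagm y = diagm (x + y)"
  by (simp add: diagm_def vec_eq_iff)

lemma diagm_diff: "diagm x - diagm y = diagm (x - y)"
  by (simp add: diagm_def vec_eq_iff)

lemma diagm_zero: "diagm 0 = 0"
  by (simp add: diagm_def vec_eq_iff)

lemma pos_diag: "pos_eig_sum (diagm x) = (\<Sum>i\<in>UNIV. max (x$i) 0)"
  using pos_eig_conj[OF orthogonal_matrix_id, of x] by (simp add: transpose_mat)

lemma neg_diag: "neg_eig_sum (diagm x) = (\<Sum>i\<in>UNIV. min (x$i) 0)"
  using neg_eig_conj[OF orthogonal_matrix_id, of x] by (simp add: transpose_mat)

lemma max_scale: "c \<ge> 0 \<Longrightarrow> max (c * x) 0 = c * max x (0::real)"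
  by (cases "x \<ge> 0") (auto simp: max_def mult_le_0_iff)

lemma min_scale: "c \<ge> 0 \<Longrightarrow> min (c * x) 0 = c * min x (0::real)"
  by (cases "x \<ge> 0") (auto simp: min_def mult_le_0_iff)

lemma conj_scale:
  fixes Q :: "real^'n^'n"
  shows "c *\<^sub>R (transpose Q ** diagm d ** Q) = transpose Q ** diagm (c *\<^sub>R d) ** Q"
proof -
  have "transpose Q ** (c *\<^sub>R diagm d) ** Q = (c *\<^sub>R (transpose Q ** diagm d)) ** Q"
    by (simp only: mm_scale_r)
  also have "\<dots> = c *\<^sub>R (transpose Q ** diagm d ** Q)" by (simp only: mm_scale_l)
  finally show ?thesis by (simp only: diagm_scale)
qed

lemma pucci_plus_scale:
  assumes "sym_mat M" "c \<ge> 0"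
  shows "pucci_plus l L (c *\<^sub>R M) = c * pucci_plus l L M"
proof -
  obtain Q d where Q: "orthogonal_matrix Q" and M: "M = transpose Q ** diagm d ** Q"
    using spectral assms(1) unfolding sym_mat_def by blast
  show ?thesis
    unfolding M conj_scale pucci_plus_def pos_eig_conj[OF Q] neg_eig_conj[OF Q]
    using assms(2) by (simp add: max_scale min_scale sum_distrib_left algebra_simps)
qed

lemma hypH_plus: "hypH l L F \<Longrightarrow> sym_mat M \<Longrightarrow> sym_mat N \<Longrightarrow> F (M + N) - F M \<le> pucci_plus l L N"
  unfolding hypH_def by blast

lemma hypH_minus: "hypH l L F \<Longrightarrow> sym_mat M \<Longrightarrow> sym_mat N \<Longrightarrow> pucci_minus l L N \<le> F (M + N) - F M"
  unfolding hypH_def by blast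

lemma hypH_conv: "hypH l L F \<Longrightarrow> convex_on {M. sym_mat M} F"
  unfolding hypH_def by blast

lemma hypH_0: "hypH l L F \<Longrightarrow> F 0 = 0"
  unfolding hypH_def by blast

lemma ray:
  assumes H: "hypH l L F" and sM: "sym_mat M" and rec: "recession F M \<le> 0" and s: "s > 0"
  shows "F (s *\<^sub>R M) \<le> 0"
proof -
  define \<phi> where "\<phi> t = t * F ((1/t) *\<^sub>R M)" for t
  have F0: "F 0 = 0" using hypH_0[OF H] .
  have bd: "\<phi> t \<le> pucci_plus l L M" if t: "t > 0" for t
  proof -
    have "F (0 + (1/t) *\<^sub>R M) - F 0 \<le> pucci_plus l L ((1/t) *\<^sub>R M)"
      using hypH_plus[OF H, of 0 "(1/t) *\<^sub>R M"] sM by simp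
    then have "F ((1/t) *\<^sub>R M) \<le> (1/t) * pucci_plus l L M"
      using pucci_plus_scale[OF sM, of "1/t" l L] t F0 by simp
    then show ?thesis using t unfolding \<phi>_def by (simp add: pos_le_divide_eq mult.commute)
  qed
  have mono: "\<phi> t2 \<le> \<phi> t1" if t: "0 < t1" "t1 \<le> t2" for t1 t2
  proof -
    have u: "0 \<le> t1/t2" "t1/t2 \<le> 1" using t by auto
    have eq: "(1/t2) *\<^sub>R M = (1 - t1/t2) *\<^sub>R 0 + (t1/t2) *\<^sub>R ((1/t1) *\<^sub>R M)" using t by simp
    have "F ((1/t2) *\<^sub>R M) \<le> (1 - t1/t2) * F 0 + (t1/t2) * F ((1/t1) *\<^sub>R M)"
      unfolding eq using convex_onD[OF hypH_conv[OF H] u, of 0 "(1/t1) *\<^sub>R M"] sM by simp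
    then have "F ((1/t2) *\<^sub>R M) \<le> (t1/t2) * F ((1/t1) *\<^sub>R M)" using F0 by simp
    then have "t2 * F ((1/t2) *\<^sub>R M) \<le> t2 * ((t1/t2) * F ((1/t1) *\<^sub>R M))"
      using t by (intro mult_left_mono) auto
    then show ?thesis unfolding \<phi>_def using t by simp
  qed
  define S0 where "S0 = Sup (\<phi> ` {0<..})"
  have bdd: "bdd_above (\<phi> ` {0<..})"
    by (rule bdd_aboveI[where M = "pucci_plus l L M"]) (auto intro: bd)
  have lim: "(\<phi> \<longlongrightarrow> S0) (at_right 0)"
  proof (rule order_tendstoI)
    fix a assume "a < S0"
    then obtain t0 where t0: "t0 > 0" "a < \<phi> t0"
      using less_cSUP_iff[of "{0<..}" \<phi> a] bdd unfolding S0_def by auto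
    show "\<forall>\<^sub>F x in at_right 0. a < \<phi> x"
      using eventually_at_right_real[OF t0(1)]
    proof eventually_elim
      case (elim x)
      then have "\<phi> t0 \<le> \<phi> x" using mono[of x t0] by auto
      then show ?case using t0 by linarith
    qed
  next
    fix a assume "S0 < a"
    show "\<forall>\<^sub>F x in at_right 0. \<phi> x < a"
      using eventually_at_right_real[OF zero_less_one]
    proof eventually_elim
      case (elim x)
      then have "\<phi> x \<le> S0" unfolding S0_def using bdd by (intro cSUP_upper) auto
      then show ?case using \<open>S0 < a\<close> by linarith
    qed
  qed
  have "recession F M = S0"
    unfolding recession_def using tendsto_Lim[OF trivial_limit_at_right_real lim] unfolding \<phi>_def .
  moreover have "\<phi> (1/s) \<le> S0" unfolding S0_def using bdd s by (auto intro: cSUP_upper)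
  ultimately have "\<phi> (1/s) \<le> 0" using rec by simp
  then show ?thesis using s unfolding \<phi>_def by (simp add: divide_le_0_iff)
qed


definition pv :: "('n \<Rightarrow> 'n) \<Rightarrow> real^'n \<Rightarrow> real^'n" where
  "pv p x = (\<chi> i. x $ p i)"

definition pmat :: "('n \<Rightarrow> 'n) \<Rightarrow> real^'n^'n" where
  "pmat p = (\<chi> k i. if k = p i then 1 else 0)"

lemma pmat_orth:
  assumes p: "p permutes (UNIV::'n::finite set)"
  shows "orthogonal_matrix (pmat p)"
proof -
  have inj: "p i = p j \<longleftrightarrow> i = j" for i j using permutes_inj[OF p] by (auto simp: inj_def)
  have "transpose (pmat p) ** pmat p = mat 1"
    by (simp add: vec_eq_iff matrix_matrix_mult_def transpose_def pmat_def mat_def if_distrib[of "\<lambda>x. x * _"]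
        inj sum.delta cong: if_cong)
  then show ?thesis by (simp add: orthogonal_matrix)
qed

lemma pmat_conj:
  assumes p: "p permutes (UNIV::'n::finite set)"
  shows "transpose (pmat p) ** diagm x ** pmat p = diagm (pv p x)"
proof -
  have inj: "p i = p j \<longleftrightarrow> i = j" for i j using permutes_inj[OF p] by (auto simp: inj_def)
  have "(transpose (pmat p) ** diagm x ** pmat p) $ i $ j = diagm (pv p x) $ i $ j" for i j
  proof -
    have "(transpose (pmat p) ** diagm x ** pmat p) $ i $ j
        = (\<Sum>k\<in>UNIV. (\<Sum>m\<in>UNIV. (if m = p i then 1 else 0) * (if m = k then x$m else 0)) * (if k = p j then 1 else 0))"
      by (simp add: matrix_matrix_mult_def transpose_def pmat_def diagm_def)
    also have "\<dots> = (\<Sum>k\<in>UNIV. (if k = p i then x $ k else 0) * (if k = p j then 1 else 0))"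
      by (rule sum.cong) (auto simp: if_distrib[of "\<lambda>x. x * _"] sum.delta cong: if_cong)
    also have "\<dots> = (if p i = p j then x $ p i else 0)"
      by (simp add: if_distrib[of "\<lambda>x. x * _"] sum.delta cong: if_cong)
    also have "\<dots> = diagm (pv p x) $ i $ j" by (simp add: inj diagm_def pv_def)
    finally show ?thesis .
  qed
  then show ?thesis by (simp add: vec_eq_iff)
qed

lemma F_perm:
  assumes R: "rot_invariant F" and p: "p permutes (UNIV::'n::finite set)"
  shows "F (diagm (pv p x)) = F (diagm x)"
proof -
  have "F (transpose (pmat p) ** diagm x ** pmat p) = F (diagm x)"
    using R pmat_orth[OF p] unfolding rot_invariant_def by simp
  then show ?thesis unfolding pmat_conj[OF p] .
qed

lemma pv_scale: "pv p (c *\<^sub>R x) = c *\<^sub>R pv p x"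
  by (simp add: pv_def vec_eq_iff)

definition Bd :: "(real^'n^'n \<Rightarrow> real) \<Rightarrow> real^'n \<Rightarrow> real \<Rightarrow> bool" where
  "Bd F x c \<longleftrightarrow> (\<forall>s>0. F (s *\<^sub>R diagm x) \<le> s * c)"

lemma B0: "hypH l L F \<Longrightarrow> Bd F 0 0"
  by (simp add: Bd_def diagm_zero hypH_0)

lemma Bmono: "Bd F x c \<Longrightarrow> c \<le> c' \<Longrightarrow> Bd F x c'"
  unfolding Bd_def by (meson mult_left_mono less_imp_le order_trans)

lemma Badd:
  assumes H: "hypH l L F" and "Bd F x c" "Bd F y c'"
  shows "Bd F (x + y) (c + c')"
  unfolding Bd_def
proof (intro allI impI)
  fix s :: real assume s: "s > 0"
  have eq: "s *\<^sub>R diagm (x + y) = (1 - 1/2) *\<^sub>R ((2 * s) *\<^sub>R diagm x) + (1/2) *\<^sub>R ((2 * s) *\<^sub>R diagm y)"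
    by (simp add: diagm_add[symmetric] scaleR_add_right)
  have "F (s *\<^sub>R diagm (x + y)) \<le> (1 - 1/2) * F ((2 * s) *\<^sub>R diagm x) + (1/2) * F ((2 * s) *\<^sub>R diagm y)"
    unfolding eq by (rule convex_onD[OF hypH_conv[OF H]]) auto
  also have "\<dots> \<le> (1 - 1/2) * ((2 * s) * c) + (1/2) * ((2 * s) * c')"
    using assms(2,3) s unfolding Bd_def by (intro add_mono mult_left_mono) auto
  also have "\<dots> = s * (c + c')" by (simp add: algebra_simps)
  finally show "F (s *\<^sub>R diagm (x + y)) \<le> s * (c + c')" .
qed

lemma Bsum:
  assumes H: "hypH l L F" and "finite I" and "\<And>i. i \<in> I \<Longrightarrow> Bd F (x i) (c i)"
  shows "Bd F (\<Sum>i\<in>I. x i) (\<Sum>i\<in>I. c i)"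
  using assms(2,3)
proof (induction I rule: finite_induct)
  case empty then show ?case using B0[OF H] by simp
next
  case (insert j I) then show ?case using Badd[OF H] by simp
qed

lemma Bscale:
  assumes H: "hypH l L F" and "Bd F x c" and a: "a \<ge> 0"
  shows "Bd F (a *\<^sub>R x) (a * c)"
proof (cases "a = 0")
  case True then show ?thesis using B0[OF H] by simp
next
  case False
  then have a: "a > 0" using a by simp
  show ?thesis unfolding Bd_def
  proof (intro allI impI)
    fix s :: real assume s: "s > 0"
    have "F ((s * a) *\<^sub>R diagm x) \<le> (s * a) * c" using assms(2) s a unfolding Bd_def by simp
    then show "F (s *\<^sub>R diagm (a *\<^sub>R x)) \<le> s * (a * c)"
      by (simp add: diagm_scale[symmetric])
  qed
qed

lemma Bperm:
  assumes R: "rot_invariant F" and p: "p permutes (UNIV::'n::finite set)" and B: "Bd F x c"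
  shows "Bd F (pv p x) c"
  unfolding Bd_def
proof (intro allI impI)
  fix s :: real assume s: "s > 0"
  have "F (s *\<^sub>R diagm (pv p x)) = F (s *\<^sub>R diagm x)"
    using F_perm[OF R p, of "s *\<^sub>R x"] by (simp add: diagm_scale pv_scale)
  then show "F (s *\<^sub>R diagm (pv p x)) \<le> s * c" using B s unfolding Bd_def by simp
qed


definition SP :: "real^'n \<Rightarrow> real^'n" where
  "SP x = (\<Sum>p\<in>{p. p permutes (UNIV::'n::finite set)}. pv p x)"

lemma SP_comp: fixes x :: "real^'n::finite" shows "SP x $ i = (\<Sum>p\<in>{p. p permutes (UNIV::'n::finite set)}. x $ p i)"
  by (simp add: SP_def sum_component pv_def)

lemma SP_const: fixes x :: "real^'n::finite" shows "SP x $ i = SP x $ (j::'n::finite)"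
proof -
  have t: "Transposition.transpose i j permutes (UNIV::'n set)" by (rule permutes_swap_id) auto
  have "SP x $ i = (\<Sum>p\<in>{p. p permutes (UNIV::'n set)}. x $ (p \<circ> Transposition.transpose i j) i)"
    unfolding SP_comp by (rule sum_permutations_compose_right[OF t])
  also have "\<dots> = SP x $ j" unfolding SP_comp by simp
  finally show ?thesis .
qed

lemma SP_total: fixes x :: "real^'n::finite" shows "(\<Sum>i\<in>UNIV. SP x $ i) = real (card {p. p permutes (UNIV::'n::finite set)}) * (\<Sum>i\<in>UNIV. x $ i)"
proof -
  have "(\<Sum>i\<in>UNIV. SP x $ i) = (\<Sum>p\<in>{p. p permutes (UNIV::'n set)}. \<Sum>i\<in>UNIV. x $ p i)"
    unfolding SP_comp by (rule sum.swap)
  also have "\<dots> = (\<Sum>p\<in>{p. p permutes (UNIV::'n set)}. \<Sum>i\<in>UNIV. x $ i)"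
  proof (rule sum.cong)
    fix p assume "p \<in> {p. p permutes (UNIV::'n set)}"
    then have "p permutes (UNIV::'n set)" by simp
    from sum.permute[OF this, of "\<lambda>i. x $ i"] show "(\<Sum>i\<in>UNIV. x $ p i) = (\<Sum>i\<in>UNIV. x $ i)"
      by (simp add: comp_def)
  qed simp
  finally show ?thesis by simp
qed

lemma SP_zero:
  assumes "(\<Sum>i\<in>UNIV. x $ i) = 0"
  shows "SP x = (0::real^'n::finite)"
proof -
  obtain c0 where c0: "\<forall>j. SP x $ j = c0" using SP_const[of x] by blast
  have "real CARD('n) * c0 = 0" using SP_total[of x] assms c0 by simp
  then have "\<forall>j. SP x $ j = 0" using c0 by simp
  then show ?thesis by (simp add: vec_eq_iff)
qed

definition uv :: "'n \<Rightarrow> real^'n" where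
  "uv k = (\<chi> m. if m = k then 1 else 0)"

lemma cone:
  fixes e y :: "real^'n::finite"
  assumes H: "hypH l L F" and R: "rot_invariant F"
    and e0: "(\<Sum>k\<in>UNIV. e $ k) = 0" and Be: "Bd F e c" and c: "c \<ge> 0"
    and g: "e $ i - e $ j = g" "g > 0"
    and y0: "(\<Sum>k\<in>UNIV. y $ k) = 0"
  shows "F (diagm y) \<le> (\<Sum>k\<in>UNIV. \<bar>y $ k\<bar>) * (real (card {p. p permutes (UNIV::'n set)}) * c / g)"
proof -
  let ?P = "{p. p permutes (UNIV::'n set)}"
  define K where "K = real (card ?P)"
  define C where "C = K * c / g"
  have finP: "finite ?P" by (simp add: finite_permutations)
  have ij: "i \<noteq> j" using g by auto
  define \<tau> where "\<tau> = Transposition.transpose i j"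
  have \<tau>P: "\<tau> \<in> ?P" unfolding \<tau>_def by (simp add: permutes_swap_id)
  have Bp: "Bd F (pv p e) c" if "p \<in> ?P" for p using Bperm[OF R _ Be] that by simp
  have S1: "Bd F (\<Sum>p\<in>?P - {\<tau>}. pv p e) (\<Sum>p\<in>?P - {\<tau>}. c)"
    by (rule Bsum[OF H]) (use finP Bp in auto)
  have S2: "(\<Sum>p\<in>?P - {\<tau>}. pv p e) = - pv \<tau> e"
  proof -
    have "SP e = pv \<tau> e + (\<Sum>p\<in>?P - {\<tau>}. pv p e)"
      unfolding SP_def using finP \<tau>P by (simp add: sum.remove)
    then show ?thesis using SP_zero[OF e0] by (simp add: eq_neg_iff_add_eq_0 add.commute)
  qed
  have S3: "(\<Sum>p\<in>?P - {\<tau>}. c) = (K - 1) * c"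
  proof -
    have "?P \<noteq> {}" using \<tau>P by blast
    then have "card ?P \<ge> 1" using finP by (simp add: Suc_le_eq card_gt_0_iff)
    then show ?thesis using finP \<tau>P by (simp add: K_def card_Diff_singleton of_nat_diff)
  qed
  have B1: "Bd F (- pv \<tau> e) ((K - 1) * c)" using S1 unfolding S2 S3 .
  have X: "Bd F (e + - pv \<tau> e) (c + (K - 1) * c)" by (rule Badd[OF H Be B1])
  have Y: "e + - pv \<tau> e = g *\<^sub>R (uv i - uv j)"
    using g ij by (auto simp: vec_eq_iff pv_def uv_def \<tau>_def Transposition.transpose_def)
  have Z: "c + (K - 1) * c = K * c" by (simp add: algebra_simps)
  have "Bd F (g *\<^sub>R (uv i - uv j)) (K * c)" using X unfolding Y Z .
  from Bscale[OF H this, of "1/g"] g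
  have Bij: "Bd F (uv i - uv j) C" by (simp add: C_def)
  have C0: "C \<ge> 0" unfolding C_def K_def using c g by simp
  have Bab: "Bd F (uv a - uv b) C" for a b
  proof (cases "a = b")
    case True then show ?thesis using Bmono[OF B0[OF H] C0] by simp
  next
    case False
    define \<sigma>1 where "\<sigma>1 = Transposition.transpose a i"
    define \<sigma> where "\<sigma> = Transposition.transpose j (\<sigma>1 b) \<circ> \<sigma>1"
    have p1: "\<sigma>1 permutes (UNIV::'n set)" unfolding \<sigma>1_def by (simp add: permutes_swap_id)
    have p: "\<sigma> permutes (UNIV::'n set)" unfolding \<sigma>_def
      by (rule permutes_compose[OF p1]) (simp add: permutes_swap_id)
    have "\<sigma>1 b \<noteq> i" using False unfolding \<sigma>1_def by (auto simp: Transposition.transpose_def)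
    then have sa: "\<sigma> a = i" and sb: "\<sigma> b = j" using ij unfolding \<sigma>_def \<sigma>1_def
      by (auto simp: Transposition.transpose_def)
    have inj: "\<sigma> k = \<sigma> m \<longleftrightarrow> k = m" for k m using permutes_inj[OF p] by (auto simp: inj_def)
    have "pv \<sigma> (uv i - uv j) = uv a - uv b"
      unfolding vec_eq_iff pv_def uv_def using inj[of _ a] inj[of _ b] sa sb by auto
    then show ?thesis using Bperm[OF R p Bij] by simp
  qed
  obtain k0 :: 'n where True by simp
  have ydec: "y = (\<Sum>k\<in>UNIV. y $ k *\<^sub>R (uv k - uv k0))"
  proof -
    have "(\<Sum>k\<in>UNIV. y $ k *\<^sub>R (uv k - uv k0)) $ m = y $ m" for m
    proof -
      have "(\<Sum>k\<in>UNIV. y $ k *\<^sub>R (uv k - uv k0)) $ m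
          = (\<Sum>k\<in>UNIV. y $ k * (if m = k then 1 else 0)) - (\<Sum>k\<in>UNIV. y $ k) * (if m = k0 then 1 else 0)"
        by (simp add: sum_component uv_def algebra_simps sum_subtractf sum_distrib_right)
      also have "\<dots> = y $ m" using y0 by (simp add: if_distrib[of "\<lambda>x. _ * x"] cong: if_cong)
      finally show ?thesis .
    qed
    then show ?thesis by (simp add: vec_eq_iff)
  qed
  have Bk: "Bd F (y $ k *\<^sub>R (uv k - uv k0)) (\<bar>y $ k\<bar> * C)" for k
  proof (cases "y $ k \<ge> 0")
    case True then show ?thesis using Bscale[OF H Bab True] by simp
  next
    case False
    then have "y $ k *\<^sub>R (uv k - uv k0) = \<bar>y $ k\<bar> *\<^sub>R (uv k0 - uv k)"
      by (simp add: algebra_simps)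
    then show ?thesis using Bscale[OF H Bab, of "\<bar>y $ k\<bar>" k0 k] by simp
  qed
  have "Bd F (\<Sum>k\<in>UNIV. y $ k *\<^sub>R (uv k - uv k0)) (\<Sum>k\<in>UNIV. \<bar>y $ k\<bar> * C)"
    by (rule Bsum[OF H]) (use Bk in auto)
  then have "Bd F y ((\<Sum>k\<in>UNIV. \<bar>y $ k\<bar>) * C)" using ydec by (simp add: sum_distrib_right)
  then have "F (1 *\<^sub>R diagm y) \<le> 1 * ((\<Sum>k\<in>UNIV. \<bar>y $ k\<bar>) * C)" unfolding Bd_def
    using zero_less_one by blast
  then show ?thesis by (simp add: C_def K_def)
qed


lemma mtrace_diff: "mtrace (A - B) = mtrace A - mtrace B"
  by (simp add: mtrace_def sum_subtractf)

lemma mtrace_neg: "mtrace (- A) = - mtrace A"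
  by (simp add: mtrace_def sum_negf)

lemma mtrace_mat: "mtrace (mat c :: real^'n^'n) = real CARD('n) * c"
  by (simp add: mtrace_def mat_def)

lemma mtrace_diagm: "mtrace (diagm x) = (\<Sum>i\<in>UNIV. x $ i)"
  by (simp add: mtrace_def diagm_def)

lemma mtrace_comm: fixes A B :: "real^'n^'n" shows "mtrace (A ** B) = mtrace (B ** A)"
  unfolding mtrace_def matrix_matrix_mult_def
  by (simp add: sum.swap[of "\<lambda>i k. A $ i $ k * B $ k $ i"] mult.commute)

lemma mtrace_conj:
  fixes Q D :: "real^'n^'n"
  assumes "orthogonal_matrix Q"
  shows "mtrace (transpose Q ** D ** Q) = mtrace D"
proof -
  have "mtrace (transpose Q ** D ** Q) = mtrace (Q ** (transpose Q ** D))" by (rule mtrace_comm)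
  also have "\<dots> = mtrace ((Q ** transpose Q) ** D)" by (simp add: matrix_mul_assoc)
  also have "\<dots> = mtrace D" using assms by (simp add: orthogonal_matrix_def)
  finally show ?thesis .
qed

lemma pucci_plus_mat: "pucci_plus l L (mat c :: real^'n^'n) = real CARD('n) * (L * max c 0 + l * min c 0)"
  unfolding mat_diagm pucci_plus_def pos_diag neg_diag by (simp add: algebra_simps)

lemma pucci_minus_mat: "pucci_minus l L (mat c :: real^'n^'n) = real CARD('n) * (l * max c 0 + L * min c 0)"
  unfolding mat_diagm pucci_minus_def pos_diag neg_diag by (simp add: algebra_simps)

lemma F_rot:
  assumes R: "rot_invariant F" and Q: "orthogonal_matrix Q" and "sym_mat D"
  shows "F (transpose Q ** D ** Q) = F D"
  using assms unfolding rot_invariant_def by blast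


lemma case1:
  fixes F :: "real^'n^'n \<Rightarrow> real"
  assumes H: "hypH l L F"
    and T: "\<forall>N. sym_mat N \<and> mtrace N = 0 \<longrightarrow> F N \<le> 0"
  shows "{M. sym_mat M \<and> F M \<le> 0} = {M. sym_mat M \<and> mtrace M \<le> 0}"
proof -
  have l: "0 < l" "l \<le> L" using H unfolding hypH_def by auto
  define n where "n = real CARD('n)"
  have n: "n > 0" unfolding n_def by simp
  have Fz: "F N = 0" if sN: "sym_mat N" and tN: "mtrace N = 0" for N
  proof -
    have a: "F N \<le> 0" using T sN tN by auto
    have b: "F (- N) \<le> 0" using T sN tN by (auto simp: mtrace_neg sym_iff)
    have sN': "sym_mat (- N)" using sN by (simp add: sym_iff)
    have "F ((1 - 1/2) *\<^sub>R N + (1/2) *\<^sub>R (- N)) \<le> (1 - 1/2) * F N + (1/2) * F (- N)"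
      by (rule convex_onD[OF hypH_conv[OF H]]) (use sN sN' in auto)
    moreover have "(1 - 1/2) *\<^sub>R N + (1/2) *\<^sub>R (- N) = (0::real^'n^'n)" by simp
    ultimately have "0 \<le> F N + F (- N)" using hypH_0[OF H] by simp
    then show ?thesis using a b by simp
  qed
  have key: "F M \<le> 0 \<longleftrightarrow> mtrace M \<le> 0" if sM: "sym_mat M" for M
  proof -
    define c where "c = mtrace M / n"
    define N where "N = M - mat c"
    have sN: "sym_mat N" unfolding N_def using sM by simp
    have "mtrace N = 0" unfolding N_def mtrace_diff mtrace_mat c_def using n by (simp add: n_def)
    then have FN: "F N = 0" using Fz sN by blast
    have MN: "M = N + mat c" unfolding N_def by simp
    have up: "F M \<le> n * (L * max c 0 + l * min c 0)"
      using hypH_plus[OF H sN sym_mat_c[of c]] FN unfolding MN[symmetric] pucci_plus_mat n_def by simp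
    have lo: "n * (l * max c 0 + L * min c 0) \<le> F M"
      using hypH_minus[OF H sN sym_mat_c[of c]] FN unfolding MN[symmetric] pucci_minus_mat n_def by simp
    have tr: "mtrace M = n * c" unfolding c_def using n by simp
    show ?thesis
    proof (cases "c \<le> 0")
      case True
      then have "F M \<le> n * (l * c)" using up by (simp add: max_def min_def)
      moreover have "n * (l * c) \<le> 0" using True n l by (simp add: mult_nonneg_nonpos)
      ultimately show ?thesis using tr True n by (simp add: mult_nonneg_nonpos)
    next
      case False
      then have "n * (l * c) \<le> F M" using lo by (simp add: max_def min_def)
      moreover have "n * (l * c) > 0" using False n l by simp
      moreover have "n * c > 0" using False n by simp
      ultimately show ?thesis using tr by simp
    qed
  qed
  show ?thesis using key by auto
qed


lemma case2_point:
  fixes F :: "real^'n^'n \<Rightarrow> real" and y :: "real^'n"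
  assumes H: "hypH l L F" and R: "rot_invariant F"
    and y0: "(\<Sum>k\<in>UNIV. y $ k) = 0" and dpos: "F (diagm y) > 0"
    and sM: "sym_mat M" and rec: "recession F M \<le> 0"
  shows "pucci_plus 1 (1 + F (diagm y) / (real CARD('n) * (\<Sum>k\<in>UNIV. \<bar>y $ k\<bar>)
            * real (card {p. p permutes (UNIV::'n set)}) * L)) M \<le> 0"
proof -
  let ?P = "{p. p permutes (UNIV::'n set)}"
  have l: "0 < l" "l \<le> L" using H unfolding hypH_def by auto
  define n where "n = real CARD('n)"
  have n: "n > 0" unfolding n_def by simp
  define \<delta> where "\<delta> = F (diagm y)"
  define Y where "Y = (\<Sum>k\<in>UNIV. \<bar>y $ k\<bar>)"
  define K where "K = real (card ?P)"
  define \<kappa> where "\<kappa> = \<delta> / (n * Y * K * L)"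
  have finP: "finite ?P" by (simp add: finite_permutations)
  have idP: "id \<in> ?P" by (simp add: permutes_id)
  have Pne: "?P \<noteq> {}" using permutes_id by blast
  have K: "K > 0" unfolding K_def using finP Pne card_gt_0_iff[of ?P] by simp
  have Y: "Y > 0"
  proof -
    have "Y \<ge> 0" unfolding Y_def by (simp add: sum_nonneg)
    moreover have "Y \<noteq> 0"
    proof
      assume "Y = 0"
      then have "\<forall>k. \<bar>y $ k\<bar> = 0" unfolding Y_def by (simp add: sum_nonneg_eq_0_iff)
      then have "y = 0" by (simp add: vec_eq_iff)
      then show False using dpos hypH_0[OF H] by (simp add: diagm_zero)
    qed
    ultimately show ?thesis by simp
  qed
  have \<delta>: "\<delta> > 0" unfolding \<delta>_def using dpos .
  have Lpos: "L > 0" using l by simp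
  have \<kappa>: "\<kappa> > 0" unfolding \<kappa>_def using \<delta> n Y K Lpos by simp
  obtain Q d where Q: "orthogonal_matrix Q" and Md: "M = transpose Q ** diagm d ** Q"
    using spectral sM unfolding sym_mat_def by blast
  have Bd0: "Bd F d 0" unfolding Bd_def
  proof (intro allI impI)
    fix s :: real assume s: "s > 0"
    have "F (s *\<^sub>R M) \<le> 0" by (rule ray[OF H sM rec s])
    moreover have "F (s *\<^sub>R M) = F (s *\<^sub>R diagm d)"
      unfolding Md conj_scale F_rot[OF R Q sym_diagm] diagm_scale ..
    ultimately show "F (s *\<^sub>R diagm d) \<le> s * 0" by simp
  qed
  define t where "t = (\<Sum>k\<in>UNIV. d $ k)"
  define e where "e = d - (t / n) *\<^sub>R (\<chi> i. (1::real))"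
  have ek: "e $ k = d $ k - t / n" for k unfolding e_def by simp
  have e0: "(\<Sum>k\<in>UNIV. e $ k) = 0"
    unfolding ek using n by (simp add: sum_subtractf t_def n_def)
  define ct where "ct = L * max (- t) 0 + l * min (- t) 0"
  have Be: "Bd F e ct" unfolding Bd_def
  proof (intro allI impI)
    fix s :: real assume s: "s > 0"
    have eq: "s *\<^sub>R diagm e = s *\<^sub>R diagm d + mat (- (s * t / n))"
      by (simp add: vec_eq_iff diagm_def mat_def ek algebra_simps)
    have "F (s *\<^sub>R diagm e) - F (s *\<^sub>R diagm d) \<le> pucci_plus l L (mat (- (s * t / n)) :: real^'n^'n)"
      unfolding eq by (rule hypH_plus[OF H]) auto
    also have "\<dots> = n * (L * max ((s / n) * (- t)) 0 + l * min ((s / n) * (- t)) 0)"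
      unfolding pucci_plus_mat n_def by (simp add: algebra_simps)
    also have "\<dots> = n * (L * ((s / n) * max (- t) 0) + l * ((s / n) * min (- t) 0))"
    proof -
      have sn: "s / n \<ge> 0" using s n by simp
      show ?thesis by (simp only: max_scale[OF sn] min_scale[OF sn])
    qed
    also have "\<dots> = s * ct" using n by (simp add: ct_def field_simps)
    finally show "F (s *\<^sub>R diagm e) \<le> s * ct"
      using Bd0 s unfolding Bd_def by fastforce
  qed
  have tneg: "t \<le> 0"
  proof (rule ccontr)
    assume "\<not> t \<le> 0"
    then have ctneg: "ct < 0" unfolding ct_def using l by (simp add: max_def min_def)
    have "Bd F (\<Sum>p\<in>?P. pv p e) (\<Sum>p\<in>?P. ct)"
      by (rule Bsum[OF H finP]) (use Bperm[OF R _ Be] in auto)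
    then have "Bd F 0 (K * ct)" using SP_zero[OF e0] unfolding SP_def K_def by simp
    then have "F (1 *\<^sub>R diagm 0) \<le> 1 * (K * ct)" unfolding Bd_def using zero_less_one by blast
    then have "0 \<le> K * ct" using hypH_0[OF H] by (simp add: diagm_zero)
    moreover have "K * ct < 0" using K ctneg by (simp add: mult_pos_neg)
    ultimately show False by simp
  qed
  have ct: "ct = - L * t" unfolding ct_def using tneg by (simp add: max_def min_def)
  define pos where "pos = (\<Sum>k\<in>UNIV. max (d $ k) 0)"
  define neg where "neg = (\<Sum>k\<in>UNIV. min (d $ k) 0)"
  have pp: "pucci_plus 1 (1 + \<kappa>) M = (1 + \<kappa>) * pos + neg"
    unfolding pucci_plus_def Md pos_eig_conj[OF Q] neg_eig_conj[OF Q] pos_def neg_def by simp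
  have pn: "pos + neg = t" unfolding pos_def neg_def t_def
    by (simp add: sum.distrib[symmetric]) (rule sum.cong, auto simp: max_def min_def)
  have neg0: "neg \<le> 0" unfolding neg_def by (simp add: sum_nonpos)
  have pos0: "pos \<ge> 0" unfolding pos_def by (simp add: sum_nonneg)
  define m1 where "m1 = Max (range (\<lambda>k. e $ k))"
  define m2 where "m2 = Min (range (\<lambda>k. e $ k))"
  have "m1 \<in> range (\<lambda>k. e $ k)" unfolding m1_def by (rule Max_in) auto
  then obtain i where i: "e $ i = m1" by auto
  have "m2 \<in> range (\<lambda>k. e $ k)" unfolding m2_def by (rule Min_in) auto
  then obtain j where j: "e $ j = m2" by auto
  have imax: "e $ k \<le> e $ i" for k unfolding i m1_def by (simp add: Max_ge)
  have jmin: "e $ j \<le> e $ k" for k unfolding j m2_def by (simp add: Min_le)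
  define g where "g = e $ i - e $ j"
  have ej: "e $ j \<le> 0"
  proof -
    have "(\<Sum>k\<in>(UNIV::'n set). e $ j) \<le> (\<Sum>k\<in>UNIV. e $ k)"
      using sum_mono[of "UNIV::'n set" "\<lambda>k. e $ j" "\<lambda>k. e $ k"] jmin by simp
    then have "n * e $ j \<le> 0" using e0 by (simp add: n_def)
    then show ?thesis using n by (simp add: mult_le_0_iff)
  qed
  have g0: "g \<ge> 0" unfolding g_def using imax[of j] by simp
  have posg: "pos \<le> n * g"
  proof -
    have "max (d $ k) 0 \<le> g" for k
    proof -
      have "d $ k \<le> e $ k" using ek[of k] tneg n by (simp add: divide_nonpos_pos)
      then have "d $ k \<le> g" using imax[of k] ej unfolding g_def by linarith
      then show ?thesis using g0 by simp
    qed
    then have "pos \<le> (\<Sum>k\<in>(UNIV::'n set). g)" unfolding pos_def by (intro sum_mono) auto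
    then show ?thesis by (simp add: n_def)
  qed
  show ?thesis
  proof (cases "g = 0")
    case True
    then have "pos = 0" using posg pos0 by simp
    then show ?thesis
      unfolding \<kappa>_def \<delta>_def n_def Y_def K_def[symmetric] using pp neg0 by (simp add: \<kappa>_def \<delta>_def n_def Y_def K_def)
  next
    case False
    then have gpos: "g > 0" using g0 by simp
    have ct0: "ct \<ge> 0" unfolding ct using tneg Lpos by (simp add: mult_nonneg_nonpos[of L t] less_imp_le)
    have "F (diagm y) \<le> Y * (K * ct / g)"
      using cone[OF H R e0 Be ct0 g_def[symmetric] gpos y0] unfolding Y_def K_def .
    then have "\<delta> * g \<le> Y * K * L * (- t)"
      using gpos unfolding \<delta>_def ct by (simp add: pos_le_divide_eq field_simps)
    then have "\<delta> * g / (Y * K * L) \<le> - t"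
      using Y K Lpos by (simp add: pos_divide_le_eq mult.commute mult.left_commute)
    moreover have "\<kappa> * pos \<le> \<kappa> * (n * g)" using posg \<kappa> by (simp add: mult_left_mono)
    moreover have "\<kappa> * (n * g) = \<delta> * g / (Y * K * L)"
      unfolding \<kappa>_def using n by (simp add: field_simps)
    ultimately have "\<kappa> * pos \<le> - t" by linarith
    then have "(1 + \<kappa>) * pos + neg \<le> 0" using pn by (simp add: algebra_simps)
    then show ?thesis using pp unfolding \<kappa>_def \<delta>_def n_def Y_def K_def by simp
  qed
qed


lemma kappa_pos:
  fixes F :: "real^'n^'n \<Rightarrow> real" and y :: "real^'n"
  assumes H: "hypH l L F" and dpos: "F (diagm y) > 0"
  shows "F (diagm y) / (real CARD('n) * (\<Sum>k\<in>UNIV. \<bar>y $ k\<bar>)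
            * real (card {p. p permutes (UNIV::'n set)}) * L) > 0"
proof -
  let ?P = "{p. p permutes (UNIV::'n set)}"
  have l: "0 < l" "l \<le> L" using H unfolding hypH_def by auto
  have finP: "finite ?P" by (simp add: finite_permutations)
  have Pne: "?P \<noteq> {}" using permutes_id by blast
  have K: "real (card ?P) > 0" using finP Pne card_gt_0_iff[of ?P] by simp
  define Y where "Y = (\<Sum>k\<in>UNIV. \<bar>y $ k\<bar>)"
  have Y: "Y > 0"
  proof -
    have "Y \<ge> 0" unfolding Y_def by (simp add: sum_nonneg)
    moreover have "Y \<noteq> 0"
    proof
      assume "Y = 0"
      then have "\<forall>k. \<bar>y $ k\<bar> = 0" unfolding Y_def by (simp add: sum_nonneg_eq_0_iff)
      then have "y = 0" by (simp add: vec_eq_iff)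
      then show False using dpos hypH_0[OF H] by (simp add: diagm_zero)
    qed
    ultimately show ?thesis by simp
  qed
  show ?thesis using dpos Y K l unfolding Y_def[symmetric] by simp
qed

theorem proposition6p2:
  fixes F :: "real^'n^'n \<Rightarrow> real" and l L :: real
  assumes "hypH l L F" and "rot_invariant F"
  shows "{M. sym_mat M \<and> F M \<le> 0} = {M. sym_mat M \<and> mtrace M \<le> 0}
         \<or> (\<exists>LF > 1. {M. sym_mat M \<and> recession F M \<le> 0}
                      \<subseteq> {M. sym_mat M \<and> pucci_plus 1 LF M \<le> 0})"
proof (cases "\<forall>N. sym_mat N \<and> mtrace N = 0 \<longrightarrow> F N \<le> 0")
  case True
  then show ?thesis using case1[OF assms(1)] by blast
next
  case False
  then obtain N0 where N0: "sym_mat N0" "mtrace N0 = 0" "F N0 > 0" by auto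
  obtain Q y where Q: "orthogonal_matrix Q" and Ny: "N0 = transpose Q ** diagm y ** Q"
    using spectral N0(1) unfolding sym_mat_def by blast
  have y0: "(\<Sum>k\<in>UNIV. y $ k) = 0"
    using N0(2) unfolding Ny mtrace_conj[OF Q] mtrace_diagm .
  have dpos: "F (diagm y) > 0" using N0(3) unfolding Ny F_rot[OF assms(2) Q sym_diagm] .
  define LF where "LF = 1 + F (diagm y) / (real CARD('n) * (\<Sum>k\<in>UNIV. \<bar>y $ k\<bar>)
            * real (card {p. p permutes (UNIV::'n set)}) * L)"
  have "LF > 1" unfolding LF_def using kappa_pos[OF assms(1) dpos] by simp
  moreover have "{M. sym_mat M \<and> recession F M \<le> 0} \<subseteq> {M. sym_mat M \<and> pucci_plus 1 LF M \<le> 0}"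
    unfolding LF_def using case2_point[OF assms y0 dpos] by blast
  ultimately show ?thesis by blast
qed

end
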